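(* Let $X_1,\dots,X_p$ be attributes with finite domains $D_i=\{x_i^1,\dots,x_i^{q_i}\}$, $C$ a candidate database, $\pi$ a target distribution, $k\in\{1,\dots,|C|\}$, and $A\subseteq C$ a committee with $|A|=k$. Form the binary instance: for each $i\le p$ and $j\le q_i$ a binary attribute $X_{i,j}$ with domain $\{0,1\}$; for each candidate $c\in C$ a new candidate $c'$ with $X_{i,j}(c')=1$ if $X_i(c)=x_i^j$ and $X_{i,j}(c')=0$ otherwise; target $\pi_{\mathrm{new}}$ given by $\pi_{i,j}^1=\pi_i^j$ and $\pi_{i,j}^0=1-\pi_i^j$; and $A_{\mathrm{new}}=\{c':c\in A\}$. Then (1) $\|\pi_{\mathrm{new}},r(A_{\mathrm{new}})\|_1=2\|\pi,r(A)\|_1$; (2) if $\|\pi,r(A)\|_{1,\max}\neq 0$, then $1\le \dfrac{\|\pi_{\mathrm{new}},r(A_{\mathrm{new}})\|_{1,\max}}{\|\pi,r(A)\|_{1,\max}}\le \max_i|D_i|$; (3) $\|\pi_{\mathrm{new}},r(A_{\mathrm{new}})\|_{\max}=\|\pi,r(A)\|_{\max}$.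
   Context: A candidate database is a finite set $C$ in which each candidate $c$ has a value vector $(X_1(c),\dots,X_p(c))\in D_1\times\dots\times D_p$ (different candidates may share a vector). A target distribution is $\pi=(\pi_1,\dots,\pi_p)$ with $\pi_i=(\pi_i^1,\dots,\pi_i^{q_i})$ nonnegative reals summing to $1$. For a committee $A$ of size $k$, $r_i^j(A)=|\{c\in A: X_i(c)=x_i^j\}|/k$ (and analogously for the binary instance, indexing values of $X_{i,j}$ by $0,1$). Loss functions: $\|\pi,r(A)\|_1=\sum_{i,j}|r_i^j(A)-\pi_i^j|$; $\|\pi,r(A)\|_{1,\max}=\sum_i\max_j|r_i^j(A)-\pi_i^j|$; $\|\pi,r(A)\|_{\max}=\max_{i,j}|r_i^j(A)-\pi_i^j|$. *)

theory Defs
  imports Complex_Main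
begin

(* An instance: attributes indexed by a set I of type 'i; attribute i has domain
   {x_i^0, ..., x_i^(q i - 1)}, values represented by their index j < q i. *)

definition ratio :: "('c \<Rightarrow> 'i \<Rightarrow> nat) \<Rightarrow> nat \<Rightarrow> 'c set \<Rightarrow> 'i \<Rightarrow> nat \<Rightarrow> real" where
  "ratio X k A i j = real (card {c \<in> A. X c i = j}) / real k"

definition loss_1 ::
  "'i set \<Rightarrow> ('i \<Rightarrow> nat) \<Rightarrow> ('i \<Rightarrow> nat \<Rightarrow> real) \<Rightarrow> ('c \<Rightarrow> 'i \<Rightarrow> nat) \<Rightarrow> nat \<Rightarrow> 'c set \<Rightarrow> real" where
  "loss_1 I q tgt X k A = (\<Sum>i\<in>I. \<Sum>j<q i. \<bar>ratio X k A i j - tgt i j\<bar>)"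

definition loss_1max ::
  "'i set \<Rightarrow> ('i \<Rightarrow> nat) \<Rightarrow> ('i \<Rightarrow> nat \<Rightarrow> real) \<Rightarrow> ('c \<Rightarrow> 'i \<Rightarrow> nat) \<Rightarrow> nat \<Rightarrow> 'c set \<Rightarrow> real" where
  "loss_1max I q tgt X k A = (\<Sum>i\<in>I. Max ((\<lambda>j. \<bar>ratio X k A i j - tgt i j\<bar>) ` {..<q i}))"

definition loss_max ::
  "'i set \<Rightarrow> ('i \<Rightarrow> nat) \<Rightarrow> ('i \<Rightarrow> nat \<Rightarrow> real) \<Rightarrow> ('c \<Rightarrow> 'i \<Rightarrow> nat) \<Rightarrow> nat \<Rightarrow> 'c set \<Rightarrow> real" where
  "loss_max I q tgt X k A = Max ((\<lambda>(i, j). \<bar>ratio X k A i j - tgt i j\<bar>) ` (SIGMA i:I. {..<q i}))"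

(* Original attributes are 0..p-1. New attributes are pairs (i,j),
   i < p, j < q i, with domain {0,1} (value index 0 means 0, index 1 means 1).
   New candidate c' is represented by the same label c (the map c \<mapsto> c' is a bijection),
   so A_new corresponds to A itself. *)

definition bin_attrs :: "nat \<Rightarrow> (nat \<Rightarrow> nat) \<Rightarrow> (nat \<times> nat) set" where
  "bin_attrs p q = (SIGMA i:{..<p}. {..<q i})"

definition bin_q :: "nat \<times> nat \<Rightarrow> nat" where
  "bin_q ij = 2"

definition bin_X :: "('c \<Rightarrow> nat \<Rightarrow> nat) \<Rightarrow> 'c \<Rightarrow> nat \<times> nat \<Rightarrow> nat" where
  "bin_X X c ij = (if X c (fst ij) = snd ij then 1 else 0)"

definition bin_pi :: "(nat \<Rightarrow> nat \<Rightarrow> real) \<Rightarrow> nat \<times> nat \<Rightarrow> nat \<Rightarrow> real" where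
  "bin_pi tgt ij v = (if v = 1 then tgt (fst ij) (snd ij) else 1 - tgt (fst ij) (snd ij))"

end

theory Submission
  imports Defs
begin

theorem lemma1:
  fixes p :: nat and q :: "nat \<Rightarrow> nat" and C :: "'c set" and X :: "'c \<Rightarrow> nat \<Rightarrow> nat"
    and tgt :: "nat \<Rightarrow> nat \<Rightarrow> real" and k :: nat and A :: "'c set"
  assumes "finite C"
    and "\<And>c i. c \<in> C \<Longrightarrow> i < p \<Longrightarrow> X c i < q i"
    and "\<And>i j. i < p \<Longrightarrow> j < q i \<Longrightarrow> tgt i j \<ge> 0"
    and "\<And>i. i < p \<Longrightarrow> (\<Sum>j<q i. tgt i j) = 1"
    and "1 \<le> k" and "k \<le> card C"
    and "A \<subseteq> C" and "card A = k"
  shows "loss_1 (bin_attrs p q) bin_q (bin_pi tgt) (bin_X X) k A = 2 * loss_1 {..<p} q tgt X k A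
     \<and> (loss_1max {..<p} q tgt X k A \<noteq> 0 \<longrightarrow>
          1 \<le> loss_1max (bin_attrs p q) bin_q (bin_pi tgt) (bin_X X) k A / loss_1max {..<p} q tgt X k A
        \<and> loss_1max (bin_attrs p q) bin_q (bin_pi tgt) (bin_X X) k A / loss_1max {..<p} q tgt X k A
            \<le> real (Max (q ` {..<p})))
     \<and> loss_max (bin_attrs p q) bin_q (bin_pi tgt) (bin_X X) k A = loss_max {..<p} q tgt X k A"
proof -
  have finA: "finite A" using assms(1,7) finite_subset by blast
  have kpos: "real k > 0" using assms(5) by simp
  define d where "d i j = \<bar>ratio X k A i j - tgt i j\<bar>" for i j
  have r1: "ratio (bin_X X) k A (i,j) (Suc 0) = ratio X k A i j" for i j
    unfolding ratio_def bin_X_def by (rule arg_cong[where f="\<lambda>S. real (card S) / real k"]) auto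
  have r0: "ratio (bin_X X) k A (i,j) 0 = 1 - ratio X k A i j" for i j
  proof -
    have "{c\<in>A. bin_X X c (i,j) = 0} = A - {c\<in>A. X c i = j}"
      unfolding bin_X_def by auto
    hence "card {c\<in>A. bin_X X c (i,j) = 0} = card A - card {c\<in>A. X c i = j}"
      using finA by (simp add: card_Diff_subset)
    moreover have "card {c\<in>A. X c i = j} \<le> card A" using finA by (intro card_mono) auto
    ultimately have "real (card {c\<in>A. bin_X X c (i,j) = 0}) = real k - real (card {c\<in>A. X c i = j})"
      using assms(8) by simp
    thus ?thesis unfolding ratio_def using kpos by (simp add: diff_divide_distrib)
  qed
  have e: "\<bar>ratio (bin_X X) k A (i,j) v - bin_pi tgt (i,j) v\<bar> = d i j" if "v < 2" for i j v
  proof -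
    have "v = 0 \<or> v = Suc 0" using that by auto
    thus ?thesis
    proof
      assume "v = 0" thus ?thesis using r0 unfolding bin_pi_def d_def by simp
    next
      assume "v = Suc 0" thus ?thesis using r1 unfolding bin_pi_def d_def by simp
    qed
  qed
  have dnn: "d i j \<ge> 0" for i j unfolding d_def by simp
  define L where "L = (\<Sum>i<p. \<Sum>j<q i. d i j)"
  define M where "M = (\<Sum>i<p. Max ((\<lambda>j. d i j) ` {..<q i}))"
  have L1: "loss_1 {..<p} q tgt X k A = L" unfolding loss_1_def L_def d_def by simp
  have M1: "loss_1max {..<p} q tgt X k A = M" unfolding loss_1max_def M_def d_def by simp
  have sig: "(\<Sum>ij\<in>bin_attrs p q. g (fst ij) (snd ij)) = (\<Sum>i<p. \<Sum>j<q i. g i j)" for g :: "nat \<Rightarrow> nat \<Rightarrow> real"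
    unfolding bin_attrs_def using sum.Sigma[of "{..<p}" "\<lambda>i. {..<q i}" "\<lambda>i j. g i j", symmetric] by (simp add: split_beta)
  have B1: "loss_1 (bin_attrs p q) bin_q (bin_pi tgt) (bin_X X) k A = 2 * L"
  proof -
    have "loss_1 (bin_attrs p q) bin_q (bin_pi tgt) (bin_X X) k A
        = (\<Sum>ij\<in>bin_attrs p q. 2 * d (fst ij) (snd ij))"
      unfolding loss_1_def bin_q_def
      proof (rule sum.cong)
        fix ij :: "nat \<times> nat"
        have "(\<Sum>j<2. \<bar>ratio (bin_X X) k A ij j - bin_pi tgt ij j\<bar>) = (\<Sum>j<(2::nat). d (fst ij) (snd ij))"
          by (rule sum.cong) (use e[of _ "fst ij" "snd ij"] in auto)
        thus "(\<Sum>j<2. \<bar>ratio (bin_X X) k A ij j - bin_pi tgt ij j\<bar>) = 2 * d (fst ij) (snd ij)" by simp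
      qed simp
    also have "\<dots> = 2 * L" using sig[of "\<lambda>i j. 2 * d i j"] by (simp add: L_def sum_distrib_left)
    finally show ?thesis .
  qed
  have B2: "loss_1max (bin_attrs p q) bin_q (bin_pi tgt) (bin_X X) k A = L"
  proof -
    have "loss_1max (bin_attrs p q) bin_q (bin_pi tgt) (bin_X X) k A
        = (\<Sum>ij\<in>bin_attrs p q. d (fst ij) (snd ij))"
      unfolding loss_1max_def bin_q_def
    proof (rule sum.cong)
      fix ij :: "nat \<times> nat"
      have "(\<lambda>j. \<bar>ratio (bin_X X) k A ij j - bin_pi tgt ij j\<bar>) ` {..<2} = {d (fst ij) (snd ij)}"
        using e[of _ "fst ij" "snd ij"] by (auto simp: image_def) (metis lessI pos2)
      thus "Max ((\<lambda>j. \<bar>ratio (bin_X X) k A ij j - bin_pi tgt ij j\<bar>) ` {..<2}) = d (fst ij) (snd ij)"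
        by simp
    qed simp
    also have "\<dots> = L" using sig[of d] by (simp add: L_def)
    finally show ?thesis .
  qed
  have B3: "loss_max (bin_attrs p q) bin_q (bin_pi tgt) (bin_X X) k A = loss_max {..<p} q tgt X k A"
  proof -
    have "(\<lambda>(ij, v). \<bar>ratio (bin_X X) k A ij v - bin_pi tgt ij v\<bar>) ` (SIGMA ij:bin_attrs p q. {..<bin_q ij})
        = (\<lambda>(i, j). \<bar>ratio X k A i j - tgt i j\<bar>) ` (SIGMA i:{..<p}. {..<q i})"
    proof (intro set_eqI iffI)
      fix x assume "x \<in> (\<lambda>(ij, v). \<bar>ratio (bin_X X) k A ij v - bin_pi tgt ij v\<bar>) ` (SIGMA ij:bin_attrs p q. {..<bin_q ij})"
      then obtain i j v where "(i,j) \<in> bin_attrs p q" "v < 2"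
        "x = \<bar>ratio (bin_X X) k A (i,j) v - bin_pi tgt (i,j) v\<bar>" unfolding bin_q_def by auto
      thus "x \<in> (\<lambda>(i, j). \<bar>ratio X k A i j - tgt i j\<bar>) ` (SIGMA i:{..<p}. {..<q i})"
        using e unfolding bin_attrs_def d_def by force
    next
      fix x assume "x \<in> (\<lambda>(i, j). \<bar>ratio X k A i j - tgt i j\<bar>) ` (SIGMA i:{..<p}. {..<q i})"
      then obtain i j where "i < p" "j < q i" "x = d i j" unfolding d_def by auto
      moreover have "((i,j), Suc 0) \<in> (SIGMA ij:bin_attrs p q. {..<bin_q ij})"
        using calculation unfolding bin_attrs_def bin_q_def by auto
      ultimately show "x \<in> (\<lambda>(ij, v). \<bar>ratio (bin_X X) k A ij v - bin_pi tgt ij v\<bar>) ` (SIGMA ij:bin_attrs p q. {..<bin_q ij})"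
        using e[of "Suc 0" i j] by (auto intro!: image_eqI[where x="((i,j), Suc 0)"])
    qed
    thus ?thesis unfolding loss_max_def by simp
  qed
  have qpos: "q i > 0" if "i < p" for i
    using assms(4)[OF that] by (cases "q i") auto
  have per: "Max ((\<lambda>j. d i j) ` {..<q i}) \<le> (\<Sum>j<q i. d i j)
      \<and> (\<Sum>j<q i. d i j) \<le> real (Max (q ` {..<p})) * Max ((\<lambda>j. d i j) ` {..<q i})" if ip: "i < p" for i
  proof
    have ne: "(\<lambda>j. d i j) ` {..<q i} \<noteq> {}" using qpos[OF ip] by auto
    obtain j0 where j0: "j0 < q i" "Max ((\<lambda>j. d i j) ` {..<q i}) = d i j0"
      using Max_in[OF _ ne] by auto
    show "Max ((\<lambda>j. d i j) ` {..<q i}) \<le> (\<Sum>j<q i. d i j)"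
      using j0 dnn by (simp add: member_le_sum)
    have "(\<Sum>j<q i. d i j) \<le> (\<Sum>j<q i. Max ((\<lambda>j. d i j) ` {..<q i}))"
      by (rule sum_mono) simp
    also have "\<dots> = real (q i) * Max ((\<lambda>j. d i j) ` {..<q i})" by simp
    also have "\<dots> \<le> real (Max (q ` {..<p})) * Max ((\<lambda>j. d i j) ` {..<q i})"
      using ip j0 dnn by (intro mult_right_mono) auto
    finally show "(\<Sum>j<q i. d i j) \<le> real (Max (q ` {..<p})) * Max ((\<lambda>j. d i j) ` {..<q i})" .
  qed
  have MLe: "M \<le> L" unfolding M_def L_def by (rule sum_mono) (use per in auto)
  have LM: "L \<le> real (Max (q ` {..<p})) * M" unfolding M_def L_def sum_distrib_left
    by (rule sum_mono) (use per in auto)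
  have M0: "M \<ge> 0" unfolding M_def
  proof (rule sum_nonneg)
    fix i assume "i \<in> {..<p}"
    hence ne: "(\<lambda>j. d i j) ` {..<q i} \<noteq> {}" using qpos by auto
    obtain j0 where "Max ((\<lambda>j. d i j) ` {..<q i}) = d i j0" using Max_in[OF _ ne] by auto
    thus "Max ((\<lambda>j. d i j) ` {..<q i}) \<ge> 0" using dnn by simp
  qed
  have R: "M \<noteq> 0 \<longrightarrow> 1 \<le> L / M \<and> L / M \<le> real (Max (q ` {..<p}))"
  proof
    assume "M \<noteq> 0" hence "M > 0" using M0 by simp
    thus "1 \<le> L / M \<and> L / M \<le> real (Max (q ` {..<p}))"
      using MLe LM by (simp add: pos_le_divide_eq pos_divide_le_eq)
  qed
  show ?thesis using B1 B2 B3 R L1 M1 by simp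
qed

end
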